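(* For an integer $r\ge 5$, say that straights are the rarest hand type other than straight flushes (for deck size $r$) if $freq_r(\mathrm{ST}) < freq_r(h)$ for every $h\in\{\mathrm{HC},\mathrm{1P},\mathrm{2P},\mathrm{3X},\mathrm{FL},\mathrm{FH},\mathrm{4X}\}$. Then: (i) there exists $N$ such that for all $r\ge N$, straights are the rarest hand type other than straight flushes; and (ii) if $r\ge 5$ and straights are the rarest hand type other than straight flushes, then $r\ge 761$.
   Context: Fix an integer $r\ge 5$. The deck has $4r$ cards: each card has one of $4$ suits and one of $r$ ranks $1,\dots,r$, each (suit, rank) pair occurring exactly once; rank $r$ plays the role of the ace. Let $S_r$ be the set of $7$-card subsets of the deck. Hand types of a $5$-card set: HC (high card): every $5$-card set; 1P: two cards of equal rank; 2P: two cards of rank $a$ and two cards of a rank $b\ne a$, or four cards of one rank (four of a kind is considered to contain two pair); 3X: three cards of equal rank; ST (straight): the five ranks form one of the sets $\{k,k+1,k+2,k+3,k+4\}$ with $1\le k\le r-4$, or $\{r,1,2,3,4\}$ (ace low); FL (flush): all five cards of the same suit; FH (full house): three cards of rank $a$ and two cards of a rank $b\ne a$; 4X: four cards of equal rank; SF (straight flush): both a straight and a flush. Types are counted inclusively. For $s\in S_r$ write $h\in s$ if some $5$-card subset of $s$ is of type $h$, and set $freq_r(h)=|\{s\in S_r: h\in s\}|$. *)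

theory Defs
  imports Main
begin

text \<open>A card is a pair (suit, rank) with suit in {0..<4} and rank in {1..r};
  rank r plays the role of the ace.\<close>

type_synonym card = "nat \<times> nat"

definition deck :: "nat \<Rightarrow> card set" where
  "deck r = {0..<4} \<times> {1..r}"

definition seven_sets :: "nat \<Rightarrow> card set set" where
  "seven_sets r = {s. s \<subseteq> deck r \<and> card s = 7}"

datatype hand_type = HC | P1 | P2 | X3 | ST | FL | FH | X4 | SF

definition rank_count :: "card set \<Rightarrow> nat \<Rightarrow> nat" where
  "rank_count c a = card {x \<in> c. snd x = a}"

definition is_straight :: "nat \<Rightarrow> card set \<Rightarrow> bool" where
  "is_straight r c \<longleftrightarrow>
     (\<exists>k. 1 \<le> k \<and> k + 4 \<le> r \<and> snd ` c = {k..k+4}) \<or> snd ` c = {r, 1, 2, 3, 4}"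

definition is_flush :: "card set \<Rightarrow> bool" where
  "is_flush c \<longleftrightarrow> (\<exists>u. \<forall>x\<in>c. fst x = u)"

text \<open>Hand type of a 5-card set (types counted inclusively).\<close>
fun is_type :: "nat \<Rightarrow> hand_type \<Rightarrow> card set \<Rightarrow> bool" where
  "is_type r HC c = True"
| "is_type r P1 c = (\<exists>x\<in>c. \<exists>y\<in>c. x \<noteq> y \<and> snd x = snd y)"
| "is_type r P2 c = ((\<exists>a b. a \<noteq> b \<and> rank_count c a \<ge> 2 \<and> rank_count c b \<ge> 2)
                      \<or> (\<exists>a. rank_count c a \<ge> 4))"
| "is_type r X3 c = (\<exists>a. rank_count c a \<ge> 3)"
| "is_type r ST c = is_straight r c"
| "is_type r FL c = is_flush c"
| "is_type r FH c = (\<exists>a b. a \<noteq> b \<and> rank_count c a \<ge> 3 \<and> rank_count c b \<ge> 2)"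
| "is_type r X4 c = (\<exists>a. rank_count c a \<ge> 4)"
| "is_type r SF c = (is_straight r c \<and> is_flush c)"

definition contains_type :: "nat \<Rightarrow> hand_type \<Rightarrow> card set \<Rightarrow> bool" where
  "contains_type r h s \<longleftrightarrow> (\<exists>c. c \<subseteq> s \<and> card c = 5 \<and> is_type r h c)"

definition freq :: "nat \<Rightarrow> hand_type \<Rightarrow> nat" where
  "freq r h = card {s \<in> seven_sets r. contains_type r h s}"

definition straights_rarest :: "nat \<Rightarrow> bool" where
  "straights_rarest r \<longleftrightarrow> (\<forall>h \<in> {HC, P1, P2, X3, FL, FH, X4}. freq r ST < freq r h)"

end

theory Submission imports Defs Complex_Main "HOL-Library.FuncSet"
begin

definition S4 :: "nat set" where "S4 = {0..<4}"
definition Wn :: "nat \<Rightarrow> nat \<Rightarrow> nat set" where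
  "Wn r k = (if k = 0 then {r,1,2,3,4} else {k..k+4})"
definition On :: "nat \<Rightarrow> nat \<Rightarrow> card set" where
  "On r k = S4 \<times> ({1..r} - Wn r k - {k+5})"
definition Sg :: "nat set set" where "Sg = {T. T \<subseteq> S4 \<and> card T = 1}"
definition Db :: "nat set set" where "Db = {T. T \<subseteq> S4 \<and> card T = 2}"
definition piece :: "nat \<Rightarrow> nat \<Rightarrow> nat set \<Rightarrow> ((nat \<Rightarrow> nat set) \<times> card set) set" where
  "piece r k D = (PiE (Wn r k) (\<lambda>w. if w \<in> D then Db else Sg)) \<times> {E. E \<subseteq> On r k \<and> card E = 2 - card D}"
definition Dom :: "nat \<Rightarrow> nat \<Rightarrow> ((nat \<Rightarrow> nat set) \<times> card set) set" where
  "Dom r k = (\<Union>d\<in>{..2::nat}. \<Union>D\<in>{D. D \<subseteq> Wn r k \<and> card D = d}. piece r k D)"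

lemma card_Sg: "card Sg = 4" unfolding Sg_def S4_def by (subst n_subsets) auto
lemma card_Db: "card Db = 6" unfolding Db_def S4_def by (subst n_subsets) (auto simp: numeral_eq_Suc)
lemma fin_Sg: "finite Sg" unfolding Sg_def S4_def by auto
lemma fin_Db: "finite Db" unfolding Db_def S4_def by auto

lemma fin_W: "finite (Wn r k)" unfolding Wn_def by auto
lemma card_W: "r \<ge> 5 \<Longrightarrow> card (Wn r k) = 5" unfolding Wn_def by auto
lemma fin_On: "finite (On r k)" unfolding On_def S4_def by auto

lemma card_piece:
  assumes "D \<subseteq> Wn r k" "r \<ge> 5"
  shows "card (piece r k D) = 6 ^ card D * 4 ^ (5 - card D) * (card (On r k) choose (2 - card D))"
proof -
  have "card (PiE (Wn r k) (\<lambda>w. if w \<in> D then Db else Sg)) = (\<Prod>w\<in>Wn r k. if w \<in> D then 6 else 4)"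
    by (subst card_PiE[OF fin_W]) (auto intro!: prod.cong simp: card_Sg card_Db)
  also have "\<dots> = 6 ^ card D * 4 ^ (5 - card D)"
  proof -
    have "Wn r k \<inter> {x. x \<in> D} = D" "Wn r k \<inter> - {x. x \<in> D} = Wn r k - D" using assms by auto
    moreover have "card (Wn r k - D) = 5 - card D"
      using assms card_W[of r k] fin_W by (simp add: card_Diff_subset finite_subset)
    ultimately show ?thesis by (simp add: prod.If_cases[OF fin_W])
  qed
  finally show ?thesis unfolding piece_def
    by (simp add: card_cartesian_product n_subsets fin_On)
qed

lemma piece_disj:
  assumes "D \<subseteq> Wn r k" "D' \<subseteq> Wn r k" "D \<noteq> D'"
  shows "piece r k D \<inter> piece r k D' = {}"
proof (rule ccontr)
  assume "piece r k D \<inter> piece r k D' \<noteq> {}"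
  then obtain g E where h: "(g,E) \<in> piece r k D" "(g,E) \<in> piece r k D'" by auto
  from assms obtain w where w: "w \<in> Wn r k" "(w \<in> D) \<noteq> (w \<in> D')" by blast
  have "g w \<in> (if w \<in> D then Db else Sg)" "g w \<in> (if w \<in> D' then Db else Sg)"
    using h w unfolding piece_def by (auto simp: PiE_iff)
  then show False using w by (auto simp: Db_def Sg_def split: if_splits)
qed

lemma card_Dom:
  assumes "r \<ge> 5"
  shows "card (Dom r k) = 1024 * (card (On r k) choose 2) + 7680 * card (On r k) + 23040"
proof -
  let ?X = "\<lambda>d. {D. D \<subseteq> Wn r k \<and> card D = d}"
  have finX: "finite (?X d)" for d using fin_W by auto
  have finP: "finite (piece r k D)" for D unfolding piece_def
    by (intro finite_cartesian_product finite_PiE fin_W) (auto simp: fin_Sg fin_Db fin_On)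
  have inner: "card (\<Union>D\<in>?X d. piece r k D) = (5 choose d) * (6 ^ d * 4 ^ (5 - d) * (card (On r k) choose (2 - d)))" for d
  proof -
    have "card (\<Union>D\<in>?X d. piece r k D) = (\<Sum>D\<in>?X d. card (piece r k D))"
      by (rule card_UN_disjoint) (auto simp: finX finP piece_disj)
    also have "\<dots> = (\<Sum>D\<in>?X d. 6 ^ d * 4 ^ (5 - d) * (card (On r k) choose (2 - d)))"
      by (rule sum.cong) (auto simp: card_piece assms)
    also have "\<dots> = (5 choose d) * (6 ^ d * 4 ^ (5 - d) * (card (On r k) choose (2 - d)))"
      using n_subsets[OF fin_W[of r k]] card_W[OF assms] by simp
    finally show ?thesis .
  qed
  have "card (Dom r k) = (\<Sum>d\<in>{..2::nat}. card (\<Union>D\<in>?X d. piece r k D))"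
    unfolding Dom_def
  proof (rule card_UN_disjoint)
    show "\<forall>i\<in>{..2}. \<forall>j\<in>{..2}. i \<noteq> j \<longrightarrow> (\<Union>D\<in>?X i. piece r k D) \<inter> (\<Union>D\<in>?X j. piece r k D) = {}"
      using piece_disj by blast
  qed (auto simp: finX finP)
  also have "\<dots> = 1024 * (card (On r k) choose 2) + 7680 * card (On r k) + 23040"
    proof -
    have "{..2::nat} = {0,1,2}" by auto
    then show ?thesis by (simp add: inner choose_two)
  qed
  finally show ?thesis .
qed

definition Phi :: "nat \<Rightarrow> nat \<Rightarrow> (nat \<Rightarrow> nat set) \<times> card set \<Rightarrow> card set" where
  "Phi r k = (\<lambda>(g,E). (\<Union>w\<in>Wn r k. g w \<times> {w}) \<union> E)"

lemma Dom_elem: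
  assumes "(g,E) \<in> Dom r k"
  obtains D where "D \<subseteq> Wn r k" "card D \<le> 2" "g \<in> PiE (Wn r k) (\<lambda>w. if w \<in> D then Db else Sg)"
    "E \<subseteq> On r k" "card E = 2 - card D"
  using assms unfolding Dom_def piece_def by auto

lemma E_ranks: "E \<subseteq> On r k \<Longrightarrow> c \<in> E \<Longrightarrow> snd c \<notin> Wn r k \<and> snd c \<noteq> k + 5 \<and> c \<in> deck r"
  unfolding On_def deck_def S4_def by auto

lemma Phi_inj: "inj_on (Phi r k) (Dom r k)"
proof (rule inj_onI)
  fix x y assume x: "x \<in> Dom r k" and y: "y \<in> Dom r k" and eq: "Phi r k x = Phi r k y"
  obtain g E where gE: "x = (g,E)" by (cases x)
  obtain g' E' where gE': "y = (g',E')" by (cases y)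
  from x gE obtain D where D: "g \<in> PiE (Wn r k) (\<lambda>w. if w \<in> D then Db else Sg)" "E \<subseteq> On r k"
    by (auto elim: Dom_elem)
  from y gE' obtain D' where D': "g' \<in> PiE (Wn r k) (\<lambda>w. if w \<in> D' then Db else Sg)" "E' \<subseteq> On r k"
    by (auto elim: Dom_elem)
  let ?s = "Phi r k x"
  have rec: "h w = {u. (u,w) \<in> Phi r k (h,F)}" if "F \<subseteq> On r k" "w \<in> Wn r k" for h F w
    using that E_ranks[of F r k] unfolding Phi_def by fastforce
  have recE: "F = {c \<in> Phi r k (h,F). snd c \<notin> Wn r k}" if "F \<subseteq> On r k" for h F
    using that E_ranks[of F r k] unfolding Phi_def by fastforce
  have "g = g'"
  proof
    fix w show "g w = g' w"
    proof (cases "w \<in> Wn r k")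
      case True
      then show ?thesis using rec[OF D(2) True, of g] rec[OF D'(2) True, of g'] eq gE gE' by simp
    next
      case False
      then show ?thesis using D(1) D'(1) by (simp add: PiE_def extensional_def)
    qed
  qed
  moreover have "E = E'" using recE[OF D(2), of g] recE[OF D'(2), of g'] eq gE gE' by simp
  ultimately show "x = y" using gE gE' by simp
qed

lemma Dom_g_props:
  assumes "(g,E) \<in> Dom r k" "w \<in> Wn r k"
  shows "g w \<subseteq> S4" "g w \<noteq> {}" "finite (g w)"
proof -
  from assms(1) obtain D where D: "g \<in> PiE (Wn r k) (\<lambda>w. if w \<in> D then Db else Sg)" by (auto elim: Dom_elem)
  then have "g w \<in> (if w \<in> D then Db else Sg)" using PiE_mem[OF D assms(2)] by simp
  then show "g w \<subseteq> S4" "g w \<noteq> {}" "finite (g w)"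
    unfolding Db_def Sg_def S4_def by (auto split: if_splits intro: finite_subset)
qed

lemma W_sub: "r \<ge> 5 \<Longrightarrow> k + 4 \<le> r \<Longrightarrow> Wn r k \<subseteq> {1..r}"
  unfolding Wn_def by auto

lemma Phi_card:
  assumes "(g,E) \<in> Dom r k" "r \<ge> 5"
  shows "card (Phi r k (g,E)) = 7"
proof -
  from assms(1) obtain D where D: "D \<subseteq> Wn r k" "card D \<le> 2" "g \<in> PiE (Wn r k) (\<lambda>w. if w \<in> D then Db else Sg)"
    "E \<subseteq> On r k" "card E = 2 - card D" by (auto elim: Dom_elem)
  have cg: "card (g w) = (if w \<in> D then 2 else 1)" if "w \<in> Wn r k" for w
    using PiE_mem[OF D(3) that] unfolding Db_def Sg_def by (auto split: if_splits)
  have finD: "finite D" using D(1) fin_W finite_subset by blast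
  have "card (\<Union>w\<in>Wn r k. g w \<times> {w}) = (\<Sum>w\<in>Wn r k. card (g w \<times> {w}))"
    by (rule card_UN_disjoint) (auto simp: fin_W Dom_g_props[OF assms(1)])
  also have "\<dots> = (\<Sum>w\<in>Wn r k. if w \<in> D then 2 else 1)"
    by (rule sum.cong) (auto simp: cg card_cartesian_product)
  also have "\<dots> = 2 * card D + card (Wn r k - D)"
  proof -
    have "Wn r k \<inter> {x. x \<in> D} = D" "Wn r k \<inter> - {x. x \<in> D} = Wn r k - D" using D(1) by auto
    then show ?thesis by (simp add: sum.If_cases[OF fin_W])
  qed
  also have "\<dots> = 5 + card D" using card_W[OF assms(2), of k] D(1) D(2) finD
    by (simp add: card_Diff_subset)
  finally have c1: "card (\<Union>w\<in>Wn r k. g w \<times> {w}) = 5 + card D" .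
  have disj: "(\<Union>w\<in>Wn r k. g w \<times> {w}) \<inter> E = {}" using D(4) E_ranks[of E r k] by fastforce
  have finE: "finite E" using D(4) fin_On finite_subset by blast
  have fin1: "finite (\<Union>w\<in>Wn r k. g w \<times> {w})" by (auto simp: fin_W Dom_g_props[OF assms(1)])
  show ?thesis unfolding Phi_def using card_Un_disjoint[OF fin1 finE disj] c1 D(2) D(5) by simp
qed

lemma Phi_deck:
  assumes "(g,E) \<in> Dom r k" "r \<ge> 5" "k + 4 \<le> r"
  shows "Phi r k (g,E) \<subseteq> deck r"
proof -
  from assms(1) obtain D where "E \<subseteq> On r k" by (auto elim: Dom_elem)
  then show ?thesis unfolding Phi_def using E_ranks[of E r k] W_sub[OF assms(2,3)]
      Dom_g_props(1)[OF assms(1)] unfolding deck_def S4_def by fastforce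
qed

lemma Phi_ST:
  assumes "(g,E) \<in> Dom r k" "r \<ge> 5" "k + 4 \<le> r"
  shows "contains_type r ST (Phi r k (g,E))"
proof -
  let ?c = "(\<lambda>w. (Min (g w), w)) ` Wn r k"
  have sub: "?c \<subseteq> Phi r k (g,E)" unfolding Phi_def
    using Dom_g_props[OF assms(1)] by (auto intro!: Min_in)
  have "card ?c = 5" using card_W[OF assms(2), of k]
    by (subst card_image) (auto simp: inj_on_def)
  moreover have "snd ` ?c = Wn r k" by (auto simp: image_image)
  moreover have "is_straight r ?c"
    unfolding is_straight_def using calculation(2) assms(3) unfolding Wn_def
    by (cases "k = 0") auto
  ultimately show ?thesis unfolding contains_type_def using sub by auto
qed

lemma Phi_ranks:
  assumes "(g,E) \<in> Dom r k"
  shows "Wn r k \<subseteq> snd ` Phi r k (g,E)" "snd ` Phi r k (g,E) \<subseteq> Wn r k \<union> snd ` E"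
    "E \<subseteq> On r k" "card (snd ` E) \<le> 2" "finite (snd ` E)"
proof -
  obtain D :: "nat set" where D: "E \<subseteq> On r k" "card E = 2 - card D"
    by (rule Dom_elem[OF assms])
  show "Wn r k \<subseteq> snd ` Phi r k (g,E)"
  proof
    fix w assume w: "w \<in> Wn r k"
    obtain u where u: "u \<in> g w" using Dom_g_props(2)[OF assms w] by blast
    have "(u,w) \<in> Phi r k (g,E)" using w u unfolding Phi_def by blast
    then show "w \<in> snd ` Phi r k (g,E)" by (metis image_eqI snd_conv)
  qed
  show "snd ` Phi r k (g,E) \<subseteq> Wn r k \<union> snd ` E" unfolding Phi_def by auto
  show "E \<subseteq> On r k" by fact
  have "finite E" using D(1) fin_On finite_subset by blast
  then show "card (snd ` E) \<le> 2" "finite (snd ` E)" using card_image_le[of E snd] D(2) by auto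
qed

lemma disj_core:
  assumes "k < k'" "k' + 4 \<le> r" "r \<ge> 5" "k = 0 \<longrightarrow> r \<ge> 6"
    "Wn r k \<subseteq> R" "Wn r k' \<subseteq> R" "R \<subseteq> Wn r k \<union> X" "\<forall>x\<in>X. x \<notin> Wn r k \<and> x \<noteq> k + 5"
    "finite X" "card X \<le> 2"
  shows False
proof (cases "k' \<le> k + 5")
  case True
  have "k + 5 \<in> Wn r k'" using True assms(1) unfolding Wn_def by auto
  moreover have "k + 5 \<notin> Wn r k" using assms(4) unfolding Wn_def by auto
  ultimately show False using assms(6,7,8) by blast
next
  case False
  have "Wn r k' - {r} \<subseteq> X"
  proof
    fix x assume x: "x \<in> Wn r k' - {r}"
    then have "x \<notin> Wn r k" using False assms(1) unfolding Wn_def by auto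
    then show "x \<in> X" using x assms(6,7) by blast
  qed
  then have "card (Wn r k' - {r}) \<le> card X" using assms(9) by (rule card_mono[rotated])
  then have "card (Wn r k' - {r}) \<le> 2" using assms(10) by linarith
  moreover have "card (Wn r k' - {r}) \<ge> 4" using card_W[OF assms(3), of k'] fin_W
    by (cases "r \<in> Wn r k'") (auto simp: card_Diff_singleton)
  ultimately show False by simp
qed

lemma Phi_disj:
  assumes "k \<noteq> k'" "k + 4 \<le> r" "k' + 4 \<le> r" "r \<ge> 5" "k = 0 \<longrightarrow> r \<ge> 6" "k' = 0 \<longrightarrow> r \<ge> 6"
  shows "Phi r k ` Dom r k \<inter> Phi r k' ` Dom r k' = {}"
proof (rule ccontr)
  assume "Phi r k ` Dom r k \<inter> Phi r k' ` Dom r k' \<noteq> {}"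
  then obtain g E g' E' where m: "(g,E) \<in> Dom r k" "(g',E') \<in> Dom r k'"
    and eq: "Phi r k (g,E) = Phi r k' (g',E')" by auto
  let ?R = "snd ` Phi r k (g,E)"
  note a = Phi_ranks[OF m(1)] and b = Phi_ranks[OF m(2)]
  have ka: "\<forall>x\<in>snd ` E. x \<notin> Wn r k \<and> x \<noteq> k + 5" using E_ranks[of E r k] a(3) by auto
  have kb: "\<forall>x\<in>snd ` E'. x \<notin> Wn r k' \<and> x \<noteq> k' + 5" using E_ranks[of E' r k'] b(3) by auto
  show False
  proof (cases "k < k'")
    case True
    show False by (rule disj_core[OF True assms(3,4,5) a(1) _ a(2) ka a(5) a(4)]) (use b(1) eq in simp)
  next
    case False
    then have "k' < k" using assms(1) by simp
    show False by (rule disj_core[OF \<open>k' < k\<close> assms(2,4,6) b(1) _ b(2) kb b(5) b(4)]) (use a(1) eq in simp)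
  qed
qed

lemma fin_seven: "finite (seven_sets r)"
proof -
  have "seven_sets r \<subseteq> Pow (deck r)" unfolding seven_sets_def by auto
  moreover have "finite (deck r)" unfolding deck_def by auto
  ultimately show ?thesis using finite_subset by blast
qed

lemma ST_lower:
  assumes "K \<subseteq> {0..r-4}" "r \<ge> 5" "0 \<in> K \<Longrightarrow> r \<ge> 6"
  shows "(\<Sum>k\<in>K. card (Dom r k)) \<le> freq r ST"
proof -
  have finK: "finite K" using assms(1) finite_subset by blast
  have k4: "k + 4 \<le> r" if "k \<in> K" for k using that assms(1,2) by auto
  have finD: "finite (Dom r k)" if "k \<in> K" for k
  proof -
    have "Phi r k ` Dom r k \<subseteq> Pow (deck r)" using Phi_deck[OF _ assms(2) k4[OF that]] by auto
    then have "finite (Phi r k ` Dom r k)" using finite_subset[of _ "Pow (deck r)"] unfolding deck_def by auto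
    then show ?thesis using Phi_inj finite_image_iff by blast
  qed
  have "(\<Sum>k\<in>K. card (Dom r k)) = (\<Sum>k\<in>K. card (Phi r k ` Dom r k))"
    by (rule sum.cong) (auto simp: card_image[OF Phi_inj])
  also have "\<dots> = card (\<Union>k\<in>K. Phi r k ` Dom r k)"
  proof (rule card_UN_disjoint[symmetric])
    show "\<forall>i\<in>K. \<forall>j\<in>K. i \<noteq> j \<longrightarrow> Phi r i ` Dom r i \<inter> Phi r j ` Dom r j = {}"
    proof (intro ballI impI)
      fix i j assume ij: "i \<in> K" "j \<in> K" "i \<noteq> j"
      show "Phi r i ` Dom r i \<inter> Phi r j ` Dom r j = {}"
        by (rule Phi_disj[OF ij(3) k4[OF ij(1)] k4[OF ij(2)] assms(2)]) (use ij assms(3) in auto)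
    qed
  qed (auto simp: finK finD)
  also have "\<dots> \<le> freq r ST" unfolding freq_def
  proof (rule card_mono)
    show "finite {s \<in> seven_sets r. contains_type r ST s}" using fin_seven by auto
    show "(\<Union>k\<in>K. Phi r k ` Dom r k) \<subseteq> {s \<in> seven_sets r. contains_type r ST s}"
    proof
      fix s assume "s \<in> (\<Union>k\<in>K. Phi r k ` Dom r k)"
      then obtain k g E where k: "k \<in> K" "(g,E) \<in> Dom r k" "s = Phi r k (g,E)" by auto
      show "s \<in> {s \<in> seven_sets r. contains_type r ST s}"
        using Phi_card[OF k(2) assms(2)] Phi_deck[OF k(2) assms(2) k4[OF k(1)]]
          Phi_ST[OF k(2) assms(2) k4[OF k(1)]] k(3) unfolding seven_sets_def by auto
    qed
  qed
  finally show ?thesis .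
qed

lemma choose_real: "fact k * real (n choose k) = (\<Prod>i=0..<k. real n - real i)"
proof -
  have "(of_nat (n choose k) :: real) = of_nat n gchoose k" by (rule binomial_gbinomial)
  then show ?thesis using gbinomial_mult_fact[of k "real n"] by simp
qed

lemma choose3_nat: "6 * (n choose 3) = n * (n - 1) * (n - 2)"
proof (cases "n < 3")
  case True
  then have "n = 0 \<or> n = 1 \<or> n = 2" by auto
  then show ?thesis by auto
next
  case False
  have "real (6 * (n choose 3)) = real n * (real n - 1) * (real n - 2)"
    using choose_real[of 3 n] by (simp add: numeral_eq_Suc fact_Suc algebra_simps)
  also have "\<dots> = real (n * (n - 1) * (n - 2))" using False by (simp add: of_nat_diff)
  finally show ?thesis by (simp only: of_nat_eq_iff)
qed

lemma choose2_nat: "2 * (n choose 2) = n * (n - 1)"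
proof (cases "n < 2")
  case True
  then have "n = 0 \<or> n = 1" by auto
  then show ?thesis by auto
next
  case False
  have "real (2 * (n choose 2)) = real n * (real n - 1)"
    using choose_real[of 2 n] by (simp add: numeral_eq_Suc fact_Suc algebra_simps)
  also have "\<dots> = real (n * (n - 1))" using False by (simp add: of_nat_diff)
  finally show ?thesis by (simp only: of_nat_eq_iff)
qed

lemma card_On:
  assumes "r \<ge> 5" "k + 4 \<le> r" "k = 0 \<longrightarrow> r \<ge> 6"
  shows "card (On r k) = (if k + 5 \<le> r then 4 * (r - 6) else 4 * (r - 5))"
proof -
  have W: "Wn r k \<subseteq> {1..r}" "card (Wn r k) = 5" using W_sub[OF assms(1,2)] card_W[OF assms(1)] by auto
  have nW: "k + 5 \<notin> Wn r k" using assms(3) unfolding Wn_def by auto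
  have c1: "card ({1..r} - Wn r k) = r - 5" using W fin_W by (simp add: card_Diff_subset)
  have "card ({1..r} - Wn r k - {k+5}) = (if k + 5 \<le> r then r - 6 else r - 5)"
  proof (cases "k + 5 \<le> r")
    case True
    then have "k + 5 \<in> {1..r} - Wn r k" using nW by auto
    then show ?thesis using c1 True by (simp add: card_Diff_singleton)
  next
    case False
    then have "{1..r} - Wn r k - {k+5} = {1..r} - Wn r k" by auto
    then show ?thesis using c1 False by simp
  qed
  then show ?thesis unfolding On_def S4_def by (simp add: card_cartesian_product)
qed

definition Qn :: "nat \<Rightarrow> nat" where "Qn m = 1024 * (m choose 2) + 7680 * m + 23040"

lemma ST_lower6:
  assumes "r \<ge> 6"
  shows "(r - 4) * Qn (4 * (r - 6)) + Qn (4 * (r - 5)) \<le> freq r ST"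
proof -
  have "(\<Sum>k\<in>{0..r-4}. card (Dom r k)) \<le> freq r ST"
    by (rule ST_lower) (use assms in auto)
  moreover have "(\<Sum>k\<in>{0..r-4}. card (Dom r k)) = (\<Sum>k\<in>{0..r-4}. if k + 5 \<le> r then Qn (4 * (r - 6)) else Qn (4 * (r - 5)))"
    by (rule sum.cong) (use assms in \<open>auto simp: card_Dom card_On Qn_def\<close>)
  moreover have "\<dots> = (r - 4) * Qn (4 * (r - 6)) + Qn (4 * (r - 5))"
  proof -
    have "{0..r-4} = insert (r-4) {0..r-5}" using assms by auto
    moreover have "(\<Sum>k\<in>{0..r-5}. if k + 5 \<le> r then Qn (4 * (r - 6)) else Qn (4 * (r - 5))) = (\<Sum>k\<in>{0..r-5}. Qn (4 * (r - 6)))"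
      by (rule sum.cong) (use assms in auto)
    moreover have "r - 4 = Suc (r - 5)" using assms by simp
    ultimately show ?thesis using assms by simp
  qed
  ultimately show ?thesis by simp
qed

lemma ST_lower5: "23040 \<le> freq 5 ST"
proof -
  have "(\<Sum>k\<in>{1}. card (Dom 5 k)) \<le> freq 5 ST" by (rule ST_lower) auto
  moreover have "card (On 5 1) = 0" using card_On[of 5 1] by simp
  ultimately show ?thesis by (simp add: card_Dom)
qed

definition X4fam :: "nat \<Rightarrow> card set set" where
  "X4fam r = (\<lambda>(a,E). S4 \<times> {a} \<union> E) ` (SIGMA a:{1..r}. {E. E \<subseteq> deck r - S4 \<times> {a} \<and> card E = 3})"

lemma card_S4a: "card (S4 \<times> {a}) = 4" unfolding S4_def by (simp add: card_cartesian_product)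

lemma X4_eq: "{s \<in> seven_sets r. contains_type r X4 s} = X4fam r"
proof
  show "{s \<in> seven_sets r. contains_type r X4 s} \<subseteq> X4fam r"
  proof
    fix s assume "s \<in> {s \<in> seven_sets r. contains_type r X4 s}"
    then have s: "s \<subseteq> deck r" "card s = 7" and "contains_type r X4 s" unfolding seven_sets_def by auto
    then obtain c a where c: "c \<subseteq> s" "card c = 5" "rank_count c a \<ge> 4" unfolding contains_type_def by auto
    let ?A = "{x \<in> c. snd x = a}"
    have "?A \<subseteq> S4 \<times> {a}" using c(1) s(1) unfolding deck_def S4_def by auto
    moreover have "card ?A \<ge> 4" using c(3) unfolding rank_count_def by simp
    moreover have "finite (S4 \<times> {a})" unfolding S4_def by simp
    ultimately have Aeq: "?A = S4 \<times> {a}"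
      by (intro card_seteq) (auto simp: card_S4a)
    have "(0,a) \<in> ?A" using Aeq unfolding S4_def by auto
    then have a: "a \<in> {1..r}" using c(1) s(1) unfolding deck_def by auto
    have sub: "S4 \<times> {a} \<subseteq> s" using Aeq c(1) by auto
    have fins: "finite s" using s(2) by (intro card_ge_0_finite) simp
    have "card (s - S4 \<times> {a}) = 3" using sub s(2) fins
      by (subst card_Diff_subset) (auto simp: card_S4a intro: finite_subset)
    moreover have "s - S4 \<times> {a} \<subseteq> deck r - S4 \<times> {a}" using s(1) by auto
    moreover have "s = S4 \<times> {a} \<union> (s - S4 \<times> {a})" using sub by auto
    ultimately show "s \<in> X4fam r" unfolding X4fam_def using a by (auto intro!: image_eqI[where x="(a, s - S4 \<times> {a})"])
  qed
next
  show "X4fam r \<subseteq> {s \<in> seven_sets r. contains_type r X4 s}"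
  proof
    fix s assume "s \<in> X4fam r"
    then obtain a E where a: "a \<in> {1..r}" and E: "E \<subseteq> deck r - S4 \<times> {a}" "card E = 3" and s: "s = S4 \<times> {a} \<union> E"
      unfolding X4fam_def by auto
    have finE: "finite E" using E(2) by (intro card_ge_0_finite) simp
    have fin4: "finite (S4 \<times> {a})" unfolding S4_def by auto
    have "S4 \<times> {a} \<inter> E = {}" using E by auto
    then have "card s = 7" using s E card_Un_disjoint[OF fin4 finE] by (simp add: card_S4a)
    moreover have "s \<subseteq> deck r" using s E a unfolding deck_def S4_def by auto
    moreover have "contains_type r X4 s"
    proof -
      obtain e where e: "e \<in> E" using E(2) by (metis card.empty ex_in_conv zero_neq_numeral)
      let ?c = "insert e (S4 \<times> {a})"
      have "e \<notin> S4 \<times> {a}" using e E by auto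
      then have "card ?c = 5" using fin4 by (simp add: card_S4a)
      moreover have "rank_count ?c a \<ge> 4"
      proof -
        have "S4 \<times> {a} \<subseteq> {x \<in> ?c. snd x = a}" by auto
        then have "card (S4 \<times> {a}) \<le> card {x \<in> ?c. snd x = a}" using fin4 by (intro card_mono) auto
        then show ?thesis unfolding rank_count_def by (simp add: card_S4a)
      qed
      moreover have "?c \<subseteq> s" using s e by auto
      ultimately show ?thesis unfolding contains_type_def is_type.simps by blast
    qed
    ultimately show "s \<in> {s \<in> seven_sets r. contains_type r X4 s}" unfolding seven_sets_def by auto
  qed
qed

lemma X4_inj: "inj_on (\<lambda>(a,E). S4 \<times> {a} \<union> E) (SIGMA a:{1..r}. {E. E \<subseteq> deck r - S4 \<times> {a} \<and> card E = 3})"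
proof (rule inj_onI)
  fix x y assume x: "x \<in> (SIGMA a:{1..r}. {E. E \<subseteq> deck r - S4 \<times> {a} \<and> card E = 3})"
    and y: "y \<in> (SIGMA a:{1..r}. {E. E \<subseteq> deck r - S4 \<times> {a} \<and> card E = 3})"
    and xy: "(\<lambda>(a,E). S4 \<times> {a} \<union> E) x = (\<lambda>(a,E). S4 \<times> {a} \<union> E) y"
  obtain a E where aE: "x = (a,E)" by (cases x)
  obtain a' E' where aE': "y = (a',E')" by (cases y)
  have E: "E \<subseteq> deck r - S4 \<times> {a}" "card E = 3" using x aE by auto
  have E': "E' \<subseteq> deck r - S4 \<times> {a'}" "card E' = 3" using y aE' by auto
  have eq: "S4 \<times> {a} \<union> E = S4 \<times> {a'} \<union> E'" using xy aE aE' by simp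
  have "a = a'"
  proof (rule ccontr)
    assume ne: "a \<noteq> a'"
    have "S4 \<times> {a'} \<subseteq> E"
    proof
      fix z assume z: "z \<in> S4 \<times> {a'}"
      then have "z \<in> S4 \<times> {a} \<union> E" using eq by simp
      moreover have "z \<notin> S4 \<times> {a}" using z ne by auto
      ultimately show "z \<in> E" by simp
    qed
    moreover have "finite E" using E(2) by (intro card_ge_0_finite) simp
    ultimately have "card (S4 \<times> {a'}) \<le> card E" by (intro card_mono)
    then show False using E(2) by (simp add: card_S4a)
  qed
  moreover have "E = E'"
  proof -
    have "E = (S4 \<times> {a} \<union> E) - S4 \<times> {a}" using E(1) by blast
    moreover have "E' = (S4 \<times> {a'} \<union> E') - S4 \<times> {a'}" using E'(1) by blast
    ultimately show ?thesis using eq \<open>a = a'\<close> by simp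
  qed
  ultimately show "x = y" using aE aE' by simp
qed

lemma freq_X4: "freq r X4 = r * ((4 * r - 4) choose 3)"
proof -
  have "freq r X4 = card (SIGMA a:{1..r}. {E. E \<subseteq> deck r - S4 \<times> {a} \<and> card E = 3})"
    unfolding freq_def X4_eq X4fam_def by (rule card_image[OF X4_inj])
  also have "\<dots> = (\<Sum>a\<in>{1..r}. card {E. E \<subseteq> deck r - S4 \<times> {a} \<and> card E = 3})"
    by (rule card_SigmaI) (auto simp: deck_def)
  also have "\<dots> = (\<Sum>a\<in>{1..r}. (4 * r - 4) choose 3)"
  proof (rule sum.cong)
    fix a assume a: "a \<in> {1..r}"
    have "S4 \<times> {a} \<subseteq> deck r" using a unfolding deck_def S4_def by auto
    then have "card (deck r - S4 \<times> {a}) = 4 * r - 4"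
      by (subst card_Diff_subset) (auto simp: deck_def card_S4a card_cartesian_product S4_def)
    then show "card {E. E \<subseteq> deck r - S4 \<times> {a} \<and> card E = 3} = (4 * r - 4) choose 3"
      by (simp add: n_subsets deck_def)
  qed simp
  finally show ?thesis by simp
qed

definition chk :: "int \<Rightarrow> bool" where
  "chk r = (r * (4*r-4) * (4*r-5) * (4*r-6) \<le>
     6 * ((r - 4) * (512 * (4*r-24) * (4*r-25) + 7680 * (4*r-24) + 23040)
          + (512 * (4*r-20) * (4*r-21) + 7680 * (4*r-20) + 23040)))"

lemma chk_all: "list_all chk [6..760]"
  unfolding chk_def by code_simp

lemma Qn_int: "int (Qn m) = 512 * int m * (int m - 1) + 7680 * int m + 23040"
proof -
  have "int (2 * (m choose 2)) = int m * (int m - 1)"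
    unfolding choose2_nat by (cases m) (auto simp: algebra_simps)
  then show ?thesis unfolding Qn_def by simp
qed

lemma X4_int: "r \<ge> 6 \<Longrightarrow> 6 * int (freq r X4) = int r * (4 * int r - 4) * (4 * int r - 5) * (4 * int r - 6)"
proof -
  assume r: "r \<ge> 6"
  have "int (6 * ((4 * r - 4) choose 3)) = int ((4 * r - 4) * (4 * r - 4 - 1) * (4 * r - 4 - 2))"
    by (simp only: choose3_nat)
  also have "\<dots> = (4 * int r - 4) * (4 * int r - 5) * (4 * int r - 6)" using r by (simp add: of_nat_diff)
  finally have e: "6 * int ((4 * r - 4) choose 3) = (4 * int r - 4) * (4 * int r - 5) * (4 * int r - 6)" by simp
  have "6 * int (freq r X4) = int r * (6 * int ((4 * r - 4) choose 3))" unfolding freq_X4 by simp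
  then show ?thesis unfolding e by (simp add: algebra_simps)
qed

lemma part2:
  assumes "r \<ge> 5" "r \<le> 760"
  shows "freq r X4 \<le> freq r ST"
proof (cases "r = 5")
  case True
  have "6 * (16 choose 3) = 16 * 15 * (14::nat)" using choose3_nat[of 16] by simp
  then have "(16 choose 3) = (560::nat)" by simp
  then have "freq 5 X4 = 2800" by (simp add: freq_X4)
  then show ?thesis using True ST_lower5 by simp
next
  case False
  then have r6: "r \<ge> 6" using assms by simp
  have "int r \<in> {6..760}" using r6 assms(2) by simp
  then have "chk (int r)" using chk_all unfolding list_all_iff set_upto by blast
  moreover have "int ((r - 4) * Qn (4 * (r - 6)) + Qn (4 * (r - 5))) =
    (int r - 4) * (512 * (4*int r-24) * (4*int r-25) + 7680 * (4*int r-24) + 23040)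
          + (512 * (4*int r-20) * (4*int r-21) + 7680 * (4*int r-20) + 23040)"
  proof -
    have a: "int ((r - 4) * Qn (4 * (r - 6)) + Qn (4 * (r - 5))) = (int r - 4) * int (Qn (4*(r-6))) + int (Qn (4*(r-5)))"
      using r6 by (simp add: of_nat_diff)
    have b: "int (4*(r-6)) = 4*int r - 24" "int (4*(r-5)) = 4*int r - 20" using r6 by (simp_all add: of_nat_diff)
    show ?thesis unfolding a Qn_int b by simp
  qed
  ultimately have "6 * int (freq r X4) \<le> 6 * int ((r - 4) * Qn (4 * (r - 6)) + Qn (4 * (r - 5)))"
    unfolding chk_def X4_int[OF r6] by simp
  then have "int (freq r X4) \<le> int ((r - 4) * Qn (4 * (r - 6)) + Qn (4 * (r - 5)))"
    using mult_left_le_imp_le[of 6 "int (freq r X4)"] by fastforce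
  then have "freq r X4 \<le> (r - 4) * Qn (4 * (r - 6)) + Qn (4 * (r - 5))" by (simp only: of_nat_le_iff)
  then show ?thesis using ST_lower6[OF r6] by linarith
qed

lemma choose4_nat: "24 * (n choose 4) = n * (n - 1) * (n - 2) * (n - 3)"
proof (cases "n < 4")
  case True
  then have "n = 0 \<or> n = 1 \<or> n = 2 \<or> n = 3" by auto
  then show ?thesis by auto
next
  case False
  have "real (24 * (n choose 4)) = real n * (real n - 1) * (real n - 2) * (real n - 3)"
    using choose_real[of 4 n] by (simp add: numeral_eq_Suc fact_Suc algebra_simps)
  also have "\<dots> = real (n * (n - 1) * (n - 2) * (n - 3))" using False by (simp add: of_nat_diff)
  finally show ?thesis by (simp only: of_nat_eq_iff)
qed

lemma choose5_nat: "120 * (n choose 5) = n * (n - 1) * (n - 2) * (n - 3) * (n - 4)"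
proof (cases "n < 5")
  case True
  then have "n = 0 \<or> n = 1 \<or> n = 2 \<or> n = 3 \<or> n = 4" by auto
  then show ?thesis by auto
next
  case False
  have "real (120 * (n choose 5)) = real n * (real n - 1) * (real n - 2) * (real n - 3) * (real n - 4)"
    using choose_real[of 5 n] by (simp add: numeral_eq_Suc fact_Suc algebra_simps)
  also have "\<dots> = real (n * (n - 1) * (n - 2) * (n - 3) * (n - 4))" using False by (simp add: of_nat_diff)
  finally show ?thesis by (simp only: of_nat_eq_iff)
qed

lemma ST_upper:
  assumes "r \<ge> 5"
  shows "freq r ST \<le> (r - 3) * ((20 choose 5) * ((4 * r) choose 2))"
proof -
  let ?Dm = "SIGMA k:{0..r-4}. {c. c \<subseteq> S4 \<times> Wn r k \<and> card c = 5} \<times> {E. E \<subseteq> deck r \<and> card E = 2}"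
  let ?f = "\<lambda>(k::nat, c::card set, E::card set). c \<union> E"
  have fdeck: "finite (deck r)" unfolding deck_def by simp
  have sub: "{s \<in> seven_sets r. contains_type r ST s} \<subseteq> ?f ` ?Dm"
  proof
    fix s assume "s \<in> {s \<in> seven_sets r. contains_type r ST s}"
    then have s: "s \<subseteq> deck r" "card s = 7" and "contains_type r ST s" unfolding seven_sets_def by auto
    then obtain c where c: "c \<subseteq> s" "card c = 5" "is_straight r c" unfolding contains_type_def by auto
    obtain k where k: "k \<in> {0..r-4}" "snd ` c = Wn r k"
    proof (cases "\<exists>k. 1 \<le> k \<and> k + 4 \<le> r \<and> snd ` c = {k..k+4}")
      case True
      then obtain k where "1 \<le> k" "k + 4 \<le> r" "snd ` c = {k..k+4}" by blast
      then show ?thesis using that[of k] unfolding Wn_def by auto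
    next
      case False
      then have "snd ` c = {r,1,2,3,4}" using c(3) unfolding is_straight_def by blast
      then show ?thesis using that[of 0] unfolding Wn_def by auto
    qed
    have cs: "c \<subseteq> S4 \<times> Wn r k" using c(1) s(1) k(2) unfolding deck_def S4_def by force
    have fins: "finite s" using s(2) by (intro card_ge_0_finite) simp
    have "card (s - c) = 2" using c(1,2) s(2) fins by (simp add: card_Diff_subset finite_subset)
    moreover have "s - c \<subseteq> deck r" using s(1) by auto
    moreover have "s = c \<union> (s - c)" using c(1) by auto
    ultimately show "s \<in> ?f ` ?Dm" using k(1) cs c(2)
      by (intro image_eqI[where x="(k, c, s - c)"]) auto
  qed
  have finW: "finite (S4 \<times> Wn r k)" for k by (simp add: fin_W S4_def)
  have finDm: "finite ?Dm"
    by (intro finite_SigmaI finite_cartesian_product) (auto simp: fdeck finW)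
  have "freq r ST \<le> card (?f ` ?Dm)" unfolding freq_def
    by (rule card_mono[OF finite_imageI[OF finDm] sub])
  also have "\<dots> \<le> card ?Dm" by (rule card_image_le[OF finDm])
  also have "\<dots> = (\<Sum>k\<in>{0..r-4}. card ({c. c \<subseteq> S4 \<times> Wn r k \<and> card c = 5} \<times> {E. E \<subseteq> deck r \<and> card E = 2}))"
    by (rule card_SigmaI) (auto simp: fdeck finW)
  also have "\<dots> = (\<Sum>k\<in>{0..r-4}. (20 choose 5) * ((4 * r) choose 2))"
  proof (rule sum.cong)
    fix k assume "k \<in> {0..r-4}"
    have "card (S4 \<times> Wn r k) = 20" using card_W[OF assms] by (simp add: card_cartesian_product S4_def)
    moreover have "card (deck r) = 4 * r" unfolding deck_def by (simp add: card_cartesian_product)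
    ultimately show "card ({c. c \<subseteq> S4 \<times> Wn r k \<and> card c = 5} \<times> {E. E \<subseteq> deck r \<and> card E = 2}) = (20 choose 5) * ((4 * r) choose 2)"
      by (simp add: card_cartesian_product n_subsets fdeck fin_W S4_def)
  qed simp
  also have "\<dots> = (r - 3) * ((20 choose 5) * ((4 * r) choose 2))"
  proof -
    have "card {0..r-4} = r - 3" using assms by simp
    then show ?thesis by simp
  qed
  finally show ?thesis .
qed

definition FHfam :: "nat \<Rightarrow> card set set" where
  "FHfam r = (\<lambda>R. {0,1,2} \<times> {Min R} \<union> {0,1} \<times> {Max R} \<union> {0} \<times> (R - {Min R, Max R})) ` {R. R \<subseteq> {1..r} \<and> card R = 4}"

lemma FH_lower: "(r choose 4) \<le> freq r FH"
proof -
  let ?F = "\<lambda>R::nat set. {0::nat,1,2} \<times> {Min R} \<union> {0,1} \<times> {Max R} \<union> {0} \<times> (R - {Min R, Max R})"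
  let ?X = "{R. R \<subseteq> {1..r} \<and> card R = 4}"
  have props: "finite R" "Min R \<in> R" "Max R \<in> R" "Min R \<noteq> Max R" "card (R - {Min R, Max R}) = 2" if "R \<in> ?X" for R
  proof -
    from that have fin: "finite R" and c4: "card R = 4" using finite_subset by auto
    then have ne: "R \<noteq> {}" by auto
    show "finite R" "Min R \<in> R" "Max R \<in> R" using fin ne by auto
    show "Min R \<noteq> Max R"
    proof
      assume eq: "Min R = Max R"
      have "R \<subseteq> {Min R}"
      proof
        fix x assume x: "x \<in> R"
        have "Min R \<le> x" "x \<le> Max R" using fin x by auto
        then show "x \<in> {Min R}" using eq by simp
      qed
      then have "card R \<le> card {Min R}" by (intro card_mono) auto
      then have "card R \<le> 1" by simp
      then show False using c4 by simp
    qed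
    then show "card (R - {Min R, Max R}) = 2" using fin ne c4 by (simp add: card_Diff_subset)
  qed
  have snd_F: "snd ` ?F R = R" if "R \<in> ?X" for R
  proof -
    have "snd ` ?F R = {Min R} \<union> {Max R} \<union> (R - {Min R, Max R})" by (auto simp: image_Un)
    then show ?thesis using props(2,3)[OF that] by auto
  qed
  have inj: "inj_on ?F ?X"
  proof (rule inj_onI)
    fix R R' assume "R \<in> ?X" "R' \<in> ?X" "?F R = ?F R'"
    then show "R = R'" using snd_F[of R] snd_F[of R'] by metis
  qed
  have sub: "?F ` ?X \<subseteq> {s \<in> seven_sets r. contains_type r FH s}"
  proof
    fix s assume "s \<in> ?F ` ?X"
    then obtain R where R: "R \<in> ?X" and s: "s = ?F R" by auto
    note p = props[OF R]
    let ?A = "{0::nat,1,2} \<times> {Min R}" and ?B = "{0::nat,1} \<times> {Max R}" and ?C = "{0::nat} \<times> (R - {Min R, Max R})"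
    have cA: "card ?A = 3" and cB: "card ?B = 2" and cC: "card ?C = 2" using p(5) by (auto simp: card_cartesian_product)
    have d1: "?A \<inter> ?B = {}" using p(4) by auto
    have d2: "(?A \<union> ?B) \<inter> ?C = {}" by auto
    have cAB: "card (?A \<union> ?B) = 5" using card_Un_disjoint[OF _ _ d1] cA cB by simp
    have "card s = 7" unfolding s using card_Un_disjoint[OF _ _ d2] cAB cC p(1) by simp
    moreover have "s \<subseteq> deck r"
    proof -
      have R1: "R \<subseteq> {1..r}" using R by simp
      have "?A \<subseteq> deck r" "?B \<subseteq> deck r" "?C \<subseteq> deck r" using R1 p(2,3) unfolding deck_def by auto
      then show ?thesis unfolding s by simp
    qed
    moreover have "contains_type r FH s"
    proof -
      have "{x \<in> ?A \<union> ?B. snd x = Min R} = ?A" using p(4) by auto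
      moreover have "{x \<in> ?A \<union> ?B. snd x = Max R} = ?B" using p(4) by auto
      ultimately have "rank_count (?A \<union> ?B) (Min R) = 3" "rank_count (?A \<union> ?B) (Max R) = 2"
        unfolding rank_count_def using cA cB by simp_all
      then have "is_type r FH (?A \<union> ?B)" using p(4)
        by (simp only: is_type.simps) (intro exI[of _ "Min R"] exI[of _ "Max R"], simp)
      moreover have "?A \<union> ?B \<subseteq> s" unfolding s by blast
      ultimately show ?thesis unfolding contains_type_def using cAB by blast
    qed
    ultimately show "s \<in> {s \<in> seven_sets r. contains_type r FH s}" unfolding seven_sets_def by auto
  qed
  have "(r choose 4) = card ?X" by (simp add: n_subsets)
  also have "\<dots> = card (?F ` ?X)" using card_image[OF inj] by simp
  also have "\<dots> \<le> freq r FH" unfolding freq_def by (rule card_mono[OF _ sub]) (use fin_seven in auto)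
  finally show ?thesis .
qed

lemma FL_lower: "r \<ge> 2 \<Longrightarrow> (r choose 5) \<le> freq r FL"
proof -
  assume r2: "r \<ge> 2"
  let ?F = "\<lambda>R::nat set. {0::nat} \<times> R \<union> {(1,1),(1,2)}"
  let ?X = "{R. R \<subseteq> {1..r} \<and> card R = 5}"
  have inv: "snd ` {x \<in> ?F R. fst x = 0} = R" for R
  proof -
    have "{x \<in> ?F R. fst x = 0} = {0} \<times> R" by auto
    then show ?thesis by auto
  qed
  have inj: "inj_on ?F ?X"
  proof (rule inj_onI)
    fix R R' assume "R \<in> ?X" "R' \<in> ?X" "?F R = ?F R'"
    then show "R = R'" using inv[of R] inv[of R'] by metis
  qed
  have sub: "?F ` ?X \<subseteq> {s \<in> seven_sets r. contains_type r FL s}"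
  proof
    fix s assume "s \<in> ?F ` ?X"
    then obtain R where R: "R \<subseteq> {1..r}" "card R = 5" and s: "s = ?F R" by auto
    have finR: "finite R" using R(1) finite_subset by auto
    have c5: "card ({0::nat} \<times> R) = 5" using R(2) by (simp add: card_cartesian_product)
    have d: "({0::nat} \<times> R) \<inter> {(1,1),(1,2)} = {}" by auto
    have c2: "card {(1::nat,1::nat),(1,2)} = 2" by simp
    have "card s = 7" unfolding s using card_Un_disjoint[OF _ _ d] c5 c2 finR by simp
    moreover have "s \<subseteq> deck r"
    proof -
      have "{0::nat} \<times> R \<subseteq> deck r" using R(1) unfolding deck_def by auto
      moreover have "{(1::nat,1::nat),(1,2)} \<subseteq> deck r" using r2 unfolding deck_def by auto
      ultimately show ?thesis unfolding s by simp
    qed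
    moreover have "contains_type r FL s"
    proof -
      have "{0::nat} \<times> R \<subseteq> s" unfolding s by blast
      moreover have "is_flush ({0::nat} \<times> R)" unfolding is_flush_def by auto
      ultimately show ?thesis unfolding contains_type_def is_type.simps using c5 by blast
    qed
    ultimately show "s \<in> {s \<in> seven_sets r. contains_type r FL s}" unfolding seven_sets_def by auto
  qed
  have "(r choose 5) = card ?X" by (simp add: n_subsets)
  also have "\<dots> = card (?F ` ?X)" using card_image[OF inj] by simp
  also have "\<dots> \<le> freq r FL" unfolding freq_def by (rule card_mono[OF _ sub]) (use fin_seven in auto)
  finally show ?thesis .
qed

lemma two_elems: "2 \<le> card A \<Longrightarrow> \<exists>x\<in>A. \<exists>y\<in>A. x \<noteq> y"
proof -
  assume a: "2 \<le> card A"
  then have "A \<noteq> {}" by auto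
  then obtain x where x: "x \<in> A" by auto
  have "finite A" using a by (intro card_ge_0_finite) simp
  then have "card (A - {x}) \<ge> 1" using a x by (simp add: card_Diff_singleton)
  then obtain y where "y \<in> A - {x}" by (metis card.empty ex_in_conv not_one_le_zero)
  then show ?thesis using x by auto
qed

lemma FH_mono:
  assumes "h \<in> {HC, P1, P2, X3}"
  shows "freq r FH \<le> freq r h"
  unfolding freq_def
proof (rule card_mono)
  show "finite {s \<in> seven_sets r. contains_type r h s}" using fin_seven by auto
  show "{s \<in> seven_sets r. contains_type r FH s} \<subseteq> {s \<in> seven_sets r. contains_type r h s}"
  proof clarify
    fix s assume s: "s \<in> seven_sets r" "contains_type r FH s"
    then obtain c a b where c: "c \<subseteq> s" "card c = 5" "a \<noteq> b" "rank_count c a \<ge> 3" "rank_count c b \<ge> 2"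
      unfolding contains_type_def by auto
    have "is_type r h c"
    proof -
      have "2 \<le> card {x \<in> c. snd x = a}" using c(4) unfolding rank_count_def by simp
      then obtain x y where "x \<in> c" "y \<in> c" "x \<noteq> y" "snd x = a" "snd y = a" using two_elems by blast
      then have "is_type r P1 c" by (simp only: is_type.simps) metis
      moreover have "is_type r P2 c"
      proof -
        have "2 \<le> rank_count c a" using c(4) by simp
        then show ?thesis using c(3,5) by (simp only: is_type.simps) blast
      qed
      moreover have "is_type r X3 c" using c(4) by auto
      moreover have "h = HC \<or> h = P1 \<or> h = P2 \<or> h = X3" using assms by simp
      ultimately show ?thesis by (auto simp del: is_type.simps simp add: is_type.simps(1))
    qed
    then show "contains_type r h s" unfolding contains_type_def using c by auto
  qed
qed


lemma prod_ge4: "a \<le> a' \<Longrightarrow> b \<le> b' \<Longrightarrow> c \<le> c' \<Longrightarrow> d \<le> (d'::nat) \<Longrightarrow> a * b * c * d \<le> a' * b' * c' * d'"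
  by (intro mult_le_mono) auto

lemma ST_cubic:
  assumes "r \<ge> 5"
  shows "240 * freq r ST \<le> 51200000 * r ^ 3"
proof -
  have c20: "(20 choose 5) * 120 \<le> (3200000::nat)"
    using binomial_fact_pow[of 20 5] by (simp add: fact_numeral)
  have c4r: "2 * ((4 * r) choose 2) \<le> 16 * r * r"
  proof -
    have "2 * ((4 * r) choose 2) = 4 * r * (4 * r - 1)" by (rule choose2_nat)
    also have "\<dots> \<le> 4 * r * (4 * r)" by simp
    finally show ?thesis by simp
  qed
  have "240 * freq r ST \<le> 240 * ((r - 3) * ((20 choose 5) * ((4 * r) choose 2)))"
    using ST_upper[OF assms] by simp
  also have "\<dots> = (r - 3) * ((20 choose 5) * 120) * (2 * ((4 * r) choose 2))" by simp
  also have "\<dots> \<le> r * 3200000 * (16 * r * r)"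
    by (intro mult_le_mono c20 c4r) simp
  also have "\<dots> = 51200000 * r ^ 3" by (simp add: power3_eq_cube)
  finally show ?thesis .
qed

lemma X4_quartic:
  assumes "r \<ge> 2"
  shows "r ^ 4 \<le> 6 * freq r X4"
proof -
  have "6 * freq r X4 = r * (6 * ((4 * r - 4) choose 3))" unfolding freq_X4 by simp
  also have "\<dots> = r * ((4 * r - 4) * (4 * r - 4 - 1) * (4 * r - 4 - 2))" by (simp only: choose3_nat)
  also have "\<dots> = r * (4 * r - 4) * (4 * r - 4 - 1) * (4 * r - 4 - 2)" by (simp add: mult.assoc)
  finally have e: "6 * freq r X4 = r * (4 * r - 4) * (4 * r - 4 - 1) * (4 * r - 4 - 2)" .
  have "r * r * r * r \<le> r * (4 * r - 4) * (4 * r - 4 - 1) * (4 * r - 4 - 2)"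
    by (rule prod_ge4) (use assms in auto)
  then show ?thesis unfolding e by (simp add: power4_eq_xxxx)
qed

lemma C4_quartic:
  assumes "r \<ge> 6"
  shows "r ^ 4 \<le> 192 * (r choose 4)"
proof -
  have "r * r * r * r \<le> r * (2 * (r - 1)) * (2 * (r - 2)) * (2 * (r - 3))"
    by (rule prod_ge4) (use assms in auto)
  also have "\<dots> = 8 * (r * (r - 1) * (r - 2) * (r - 3))" by (simp add: algebra_simps)
  also have "\<dots> = 8 * (24 * (r choose 4))" by (simp only: choose4_nat)
  finally show ?thesis by (simp add: power4_eq_xxxx)
qed

lemma pow5: "(r::nat) ^ 5 = r * r * r * r * r"
  by (simp add: numeral_eq_Suc)

lemma pow_split: "(r::nat) ^ 4 = r * r ^ 3" "(r::nat) ^ 5 = (r * r) * r ^ 3"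
  by (simp_all add: numeral_eq_Suc)

lemma C5_quintic:
  assumes "r \<ge> 8"
  shows "r ^ 5 \<le> 3840 * (r choose 5)"
proof -
  have "r * r * r * r * r \<le> r * (2 * (r - 1)) * (2 * (r - 2)) * (2 * (r - 3)) * (2 * (r - 4))"
    by (intro mult_le_mono) (use assms in auto)
  also have "\<dots> = 16 * (r * (r - 1) * (r - 2) * (r - 3) * (r - 4))" by (simp add: algebra_simps)
  also have "\<dots> = 16 * (120 * (r choose 5))" by (simp only: choose5_nat)
  finally show ?thesis unfolding pow5 by simp
qed

lemma part1:
  assumes r: "r \<ge> 100000000"
  shows "straights_rarest r"
proof -
  have r3: "0 < r ^ 3" using r by simp
  have st: "240 * freq r ST \<le> 51200000 * r ^ 3" using ST_cubic r by simp
  have x4: "freq r ST < freq r X4"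
  proof -
    have "1440 * freq r ST \<le> 307200000 * r ^ 3" using st by simp
    also have "\<dots> < 240 * r * r ^ 3" using r r3 by (intro mult_strict_right_mono) auto
    also have "\<dots> = 240 * r ^ 4" by (simp add: pow_split)
    also have "\<dots> \<le> 240 * (6 * freq r X4)" using X4_quartic r by simp
    finally show ?thesis by simp
  qed
  have fh: "freq r ST < freq r FH"
  proof -
    have "46080 * freq r ST \<le> 9830400000 * r ^ 3" using st by simp
    also have "\<dots> < 240 * r * r ^ 3" using r r3 by (intro mult_strict_right_mono) auto
    also have "\<dots> = 240 * r ^ 4" by (simp add: pow_split)
    also have "\<dots> \<le> 240 * (192 * (r choose 4))" using C4_quartic r by simp
    also have "\<dots> \<le> 240 * (192 * freq r FH)" using FH_lower[of r] by simp
    finally show ?thesis by simp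
  qed
  have fl: "freq r ST < freq r FL"
  proof -
    have "921600 * freq r ST \<le> 196608000000 * r ^ 3" using st by simp
    also have "\<dots> < 240 * (r * r) * r ^ 3" using r r3
      by (intro mult_strict_right_mono) (auto intro: less_le_trans[OF _ mult_le_mono[of 100000000 r 100000000 r]])
    also have "\<dots> = 240 * r ^ 5" by (simp add: pow_split)
    also have "\<dots> \<le> 240 * (3840 * (r choose 5))" using C5_quintic r by simp
    also have "\<dots> \<le> 240 * (3840 * freq r FL)" using FL_lower[of r] r by simp
    finally show ?thesis by simp
  qed
  show ?thesis unfolding straights_rarest_def
  proof
    fix h assume h: "h \<in> {HC, P1, P2, X3, FL, FH, X4}"
    show "freq r ST < freq r h"
    proof (cases "h \<in> {HC, P1, P2, X3}")
      case True
      then show ?thesis using FH_mono[OF True, of r] fh by simp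
    next
      case False
      then have "h = FL \<or> h = FH \<or> h = X4" using h by simp
      then show ?thesis using x4 fh fl by auto
    qed
  qed
qed

theorem fact2:
  shows "(\<exists>N. \<forall>r\<ge>N. straights_rarest r) \<and>
         (\<forall>r::nat. r \<ge> 5 \<longrightarrow> straights_rarest r \<longrightarrow> r \<ge> 761)"
proof
  show "\<exists>N. \<forall>r\<ge>N. straights_rarest r" using part1 by blast
next
  show "\<forall>r::nat. r \<ge> 5 \<longrightarrow> straights_rarest r \<longrightarrow> r \<ge> 761"
  proof (intro allI impI)
    fix r :: nat assume r5: "r \<ge> 5" and sr: "straights_rarest r"
    show "r \<ge> 761"
    proof (rule ccontr)
      assume "\<not> r \<ge> 761"
      then have "freq r X4 \<le> freq r ST" using part2 r5 by simp
      moreover have "freq r ST < freq r X4" using sr unfolding straights_rarest_def by simp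
      ultimately show False by simp
    qed
  qed
qed

end
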